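(* Let $G$ be an $n$-node graph with arboricity $\lambda$ and maximum degree $\Delta\ge(2\lambda)^{20}$, and let $d=\Delta^{1/10}$. Let $G_0'$ be any subgraph of $G$ induced by a set of vertices (the graph at the start of a phase), and define $G_1$ as the graph obtained from $G_0'$ by removing all vertices in the $60$ lowest-index layers of the greedy-peeling $H$-partition with out-degree $d$, and for $i\ge1$ let $G_{i+1}$ be obtained from $G_i$ by removing all vertices in the $20\cdot 2^i$ lowest-index layers of the greedy-peeling $H$-partition of $G_i$ with out-degree $d$. Then for all $i\ge1$, $G_i$ contains at most $n'/\Delta^{2^i}$ nodes, where $n'=n/\Delta$.
   Context: The arboricity of a graph is the minimum number of forests into which its edges can be partitioned. An $H$-partition with out-degree $d$ is a partition of the vertices into layers $L_1,\dots,L_\ell$ such that every $v\in L_i$ has at most $d$ neighbors in $\bigcup_{j\ge i}L_j$; the greedy peeling algorithm constructs it by repeatedly, for $i=1,2,\dots$, putting all remaining vertices of remaining degree at most $d$ into $L_i$ and removing them. Layers of a graph are with respect to its own (original) edges; removing the lowest layers of the $H$-partition of a graph leaves a graph whose $H$-partition consists of the remaining layers in order. *)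

theory Defs
  imports Complex_Main
begin

definition simple_graph :: "'a set \<Rightarrow> 'a set set \<Rightarrow> bool" where
  "simple_graph V E \<longleftrightarrow> finite V \<and> (\<forall>e\<in>E. e \<subseteq> V \<and> card e = 2)"

definition degree :: "'a set \<Rightarrow> 'a set set \<Rightarrow> 'a \<Rightarrow> nat" where
  "degree V E v = card {u\<in>V. {u, v} \<in> E}"

definition max_degree :: "'a set \<Rightarrow> 'a set set \<Rightarrow> nat" where
  "max_degree V E = Max (degree V E ` V)"

definition is_cycle :: "'a set set \<Rightarrow> 'a list \<Rightarrow> bool" where
  "is_cycle F vs \<longleftrightarrow> length vs \<ge> 3 \<and> distinct vs \<and>
     (\<forall>i < length vs. {vs ! i, vs ! ((i + 1) mod length vs)} \<in> F)"

definition is_forest :: "'a set set \<Rightarrow> bool" where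
  "is_forest F \<longleftrightarrow> \<not> (\<exists>vs. is_cycle F vs)"

text \<open>Arboricity: least k such that the edges can be partitioned into k forests
  (classes given by a labelling of edges with labels < k; empty classes allowed).\<close>
definition arboricity :: "'a set set \<Rightarrow> nat" where
  "arboricity E = (LEAST k. \<exists>f. (\<forall>e\<in>E. f e < k) \<and>
       (\<forall>j<k. is_forest {e\<in>E. f e = j}))"

text \<open>One step of greedy peeling with out-degree d on the subgraph of (V,E) induced by R:
  the current layer is the set of vertices of R with at most d neighbours in R; it is removed.\<close>
definition peel_layer :: "'a set set \<Rightarrow> real \<Rightarrow> 'a set \<Rightarrow> 'a set" where
  "peel_layer E d R = {v\<in>R. real (card {u\<in>R. {u, v} \<in> E}) \<le> d}"

definition peel_step :: "'a set set \<Rightarrow> real \<Rightarrow> 'a set \<Rightarrow> 'a set" where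
  "peel_step E d R = R - peel_layer E d R"

definition remove_layers :: "'a set set \<Rightarrow> real \<Rightarrow> nat \<Rightarrow> 'a set \<Rightarrow> 'a set" where
  "remove_layers E d k R = (peel_step E d ^^ k) R"

fun phase_graph :: "'a set set \<Rightarrow> real \<Rightarrow> 'a set \<Rightarrow> nat \<Rightarrow> 'a set" where
  "phase_graph E d W 0 = W"
| "phase_graph E d W (Suc 0) = remove_layers E d 60 W"
| "phase_graph E d W (Suc (Suc i)) =
     remove_layers E d (20 * 2 ^ Suc i) (phase_graph E d W (Suc i))"

end

theory Submission
  imports Defs
begin


lemma forest_mono: "is_forest F \<Longrightarrow> G \<subseteq> F \<Longrightarrow> is_forest G"
  unfolding is_forest_def is_cycle_def by blast

lemma forest_card:
  assumes "finite R" "\<forall>e\<in>F. e \<subseteq> R \<and> card e = 2" "is_forest F"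
  shows "card F \<le> card R"
  using assms
proof (induction R arbitrary: F rule: finite_psubset_induct)
  case (psubset R)
  have finF: "finite F"
    using psubset.prems(1) psubset.hyps(1) by (meson Pow_iff finite_Pow_iff finite_subset subsetI)
  define N where "N v = {u. {u,v} \<in> F}" for v
  have NR: "N v \<subseteq> R" for v using psubset.prems(1) unfolding N_def by auto
  have vN: "v \<notin> N v" for v
  proof
    assume "v \<in> N v" then have "{v} \<in> F" unfolding N_def by simp
    with psubset.prems(1) show False by fastforce
  qed
  show ?case
  proof (cases "\<exists>v\<in>R. card (N v) \<le> 1")
    case True
    then obtain v where v: "v \<in> R" "card (N v) \<le> 1" by blast
    define F' where "F' = {e\<in>F. v \<notin> e}"
    have sub: "F - F' \<subseteq> (\<lambda>u. {u,v}) ` N v"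
    proof
      fix e assume e: "e \<in> F - F'"
      then have "v \<in> e" "e \<in> F" unfolding F'_def by auto
      with psubset.prems(1) obtain x y where xy: "e = {x,y}" "x \<noteq> y"
        by (meson card_2_iff)
      show "e \<in> (\<lambda>u. {u,v}) ` N v"
      proof (cases "x = v")
        case True then show ?thesis using xy \<open>e \<in> F\<close> unfolding N_def
          by (auto simp: insert_commute)
      next
        case False then have "y = v" using xy \<open>v \<in> e\<close> by auto
        then show ?thesis using xy \<open>e \<in> F\<close> unfolding N_def by auto
      qed
    qed
    have "finite (N v)" using NR psubset.hyps(1) finite_subset by blast
    then have c1: "card (F - F') \<le> 1"
      using sub v(2) by (meson card_image_le card_mono finite_imageI order_trans)
    have h1: "R - {v} \<subset> R" using v by auto
    have h2: "\<forall>e\<in>F'. e \<subseteq> R - {v} \<and> card e = 2"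
      using psubset.prems(1) unfolding F'_def by auto
    have h3: "is_forest F'" by (rule forest_mono[OF psubset.prems(2)]) (auto simp: F'_def)
    have "card F' \<le> card (R - {v})" using psubset.IH[OF h1 h2 h3] .
    moreover have "card F \<le> card F' + card (F - F')"
    proof -
      have s: "F' \<subseteq> F" unfolding F'_def by blast
      show ?thesis
        using card_Diff_subset[OF finite_subset[OF s finF] s] card_mono[OF finF s] by linarith
    qed
    moreover have "card R \<ge> 1" using v(1) psubset.hyps(1) card_gt_0_iff
      by (metis One_nat_def Suc_leI empty_iff)
    ultimately show ?thesis using c1 v(1) psubset.hyps(1)
      by (simp add: card_Diff_singleton)
  next
    case False
    then have deg2: "\<forall>v\<in>R. card (N v) \<ge> 2" by auto
    show ?thesis
    proof (cases "R = {}")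
      case True
      then have "F = {}" using psubset.prems(1) by fastforce
      then show ?thesis by simp
    next
      case False
      then obtain r where r: "r \<in> R" by blast
      define P where "P vs \<longleftrightarrow> vs \<noteq> [] \<and> distinct vs \<and> set vs \<subseteq> R \<and>
          (\<forall>i. Suc i < length vs \<longrightarrow> {vs!i, vs!Suc i} \<in> F)" for vs
      have "P [r]" using r unfolding P_def by auto
      moreover have "\<forall>vs. P vs \<longrightarrow> length vs < Suc (card R)"
        unfolding P_def by (metis card_mono distinct_card less_Suc_eq_le psubset.hyps(1))
      ultimately obtain vs where vs: "P vs" and mx: "\<And>ws. P ws \<Longrightarrow> length ws \<le> length vs"
        using Lattices_Big.ex_has_greatest_nat[of P "[r]" length "Suc (card R)"] by blast
      define m where "m = length vs"
      define v where "v = vs ! (m - 1)"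
      have m1: "m \<ge> 1" using vs unfolding P_def m_def by (cases vs) auto
      have vR: "v \<in> R" using vs m1 unfolding P_def v_def m_def by auto
      have c2: "card (N v) \<ge> 2" using deg2 vR by auto
      have "\<not> N v \<subseteq> {vs ! (m - 2)}"
      proof
        assume "N v \<subseteq> {vs ! (m - 2)}"
        then have "card (N v) \<le> card {vs ! (m - 2)}" by (intro card_mono) auto
        then show False using c2 by simp
      qed
      then obtain u where u: "u \<in> N v" "u \<noteq> vs ! (m - 2)" by blast
      have uv: "u \<noteq> v" using u vN by auto
      have uin: "u \<in> set vs"
      proof (rule ccontr)
        assume nu: "u \<notin> set vs"
        have "P (vs @ [u])"
          unfolding P_def
        proof (intro conjI allI impI)
          show "distinct (vs @ [u])" using vs nu unfolding P_def by auto
          show "set (vs @ [u]) \<subseteq> R" using vs NR u unfolding P_def by auto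
          fix i assume i: "Suc i < length (vs @ [u])"
          show "{(vs @ [u]) ! i, (vs @ [u]) ! Suc i} \<in> F"
          proof (cases "Suc i < m")
            case True then show ?thesis using vs unfolding P_def m_def by (auto simp: nth_append)
          next
            case False
            then have "i = m - 1" using i m_def by auto
            then show ?thesis using u(1) m1 unfolding N_def v_def m_def
              by (auto simp: nth_append insert_commute)
          qed
        qed simp
        then show False using mx[of "vs @ [u]"] unfolding m_def by simp
      qed
      then obtain j where j: "j < m" "vs ! j = u" unfolding m_def by (metis in_set_conv_nth)
      have "j \<noteq> m - 1" using j uv unfolding v_def by auto
      moreover have "j \<noteq> m - 2" using j u by auto
      ultimately have j3: "j + 3 \<le> m" using j by linarith
      define ws where "ws = drop j vs"
      have lw: "length ws = m - j" unfolding ws_def m_def by simp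
      have "is_cycle F ws"
        unfolding is_cycle_def
      proof (intro conjI allI impI)
        show "3 \<le> length ws" using lw j3 by simp
        show "distinct ws" using vs unfolding ws_def P_def by simp
        fix i assume i: "i < length ws"
        show "{ws ! i, ws ! ((i + 1) mod length ws)} \<in> F"
        proof (cases "i + 1 < length ws")
          case True
          then have "Suc (j + i) < m" using lw by simp
          then show ?thesis using vs True unfolding P_def ws_def m_def by auto
        next
          case False
          then have ii: "i + 1 = length ws" using i by simp
          then have "(i + 1) mod length ws = 0" by simp
          moreover have "ws ! i = v"
          proof -
            have idx: "j + i = m - 1" using ii lw j by linarith
            show ?thesis unfolding ws_def v_def using idx j by (simp add: m_def)
          qed
          moreover have "ws ! 0 = u" using j unfolding ws_def m_def by simp
          ultimately show ?thesis using u(1) unfolding N_def by (simp add: insert_commute)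
        qed
      qed
      then show ?thesis using psubset.prems(2) unfolding is_forest_def by blast
    qed
  qed
qed


lemma pw1: "x > 0 \<Longrightarrow> (x powr (1/20)) ^ 20 = (x::real)"
proof -
  assume x: "x > 0"
  have "(x powr (1/20)) ^ 20 = (x powr (1/20)) powr (real 20)"
    using x by (subst powr_realpow) auto
  also have "\<dots> = x powr ((1/20) * 20)" by (simp add: powr_powr)
  finally show ?thesis using x by simp
qed
lemma pw2: "x \<ge> 0 \<Longrightarrow> (x ^ 20) powr (1/20) = (x::real)"
proof (cases "x = 0")
  case False
  assume "x \<ge> 0"
  then have x: "x > 0" using False by simp
  have "x ^ 20 = x powr (real 20)" using x by (subst powr_realpow) auto
  then have "(x ^ 20) powr (1/20) = x powr (20 * (1/20))" by (simp add: powr_powr)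
  then show ?thesis using x by simp
qed simp
lemma finite_E: "simple_graph V E \<Longrightarrow> finite E"
  unfolding simple_graph_def by (meson Pow_iff finite_Pow_iff finite_subset subsetI)

lemma le1_forest:
  assumes "card F \<le> 1" "finite F"
  shows "is_forest F"
  unfolding is_forest_def
proof
  assume "\<exists>vs. is_cycle F vs"
  then obtain vs where c: "is_cycle F vs" by blast
  then have l: "length vs \<ge> 3" "distinct vs" unfolding is_cycle_def by auto
  have all: "\<forall>i<length vs. {vs ! i, vs ! ((i + 1) mod length vs)} \<in> F"
    using c unfolding is_cycle_def by blast
  have m1: "(0 + 1) mod length vs = 1" "(1 + 1) mod length vs = 2" using l(1) by auto
  have ne0: "vs \<noteq> []" using l(1) by auto
  have e0: "{vs!0, vs!1} \<in> F" using all[rule_format, of 0] ne0 m1 by simp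
  have e1: "{vs!1, vs!2} \<in> F" using all[rule_format, of 1] l(1) m1 by (simp add: numeral_2_eq_2)
  have ne: "{vs!0, vs!1} \<noteq> {vs!1, vs!2}"
  proof
    assume "{vs!0, vs!1} = {vs!1, vs!2}"
    then have mem: "vs!0 \<in> {vs!1, vs!2}" by blast
    have a: "0 < length vs" "1 < length vs" "2 < length vs" using l(1) by auto
    have "vs!0 \<noteq> vs!1" by (simp only: nth_eq_iff_index_eq[OF l(2) a(1) a(2)])
    moreover have "vs!0 \<noteq> vs!2" by (simp only: nth_eq_iff_index_eq[OF l(2) a(1) a(3)])
    ultimately show False using mem by blast
  qed
  have "card {{vs!0, vs!1}, {vs!1, vs!2}} \<le> card F"
    using e0 e1 assms(2) by (intro card_mono) auto
  then show False using ne assms(1) by simp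
qed

lemma arb_exists:
  assumes "simple_graph V E"
  shows "\<exists>(k::nat) f. (\<forall>e\<in>E. f e < k) \<and> (\<forall>j<k. is_forest {e\<in>E. f e = j})"
proof -
  obtain h where h: "bij_betw h E {0..<card E}" using ex_bij_betw_finite_nat finite_E[OF assms] by blast
  have "\<forall>e\<in>E. h e < card E" using h by (auto simp: bij_betw_def)
  moreover have "is_forest {e\<in>E. h e = j}" for j
  proof (rule le1_forest)
    show "finite {e\<in>E. h e = j}" using finite_E[OF assms] by simp
    have inj: "inj_on h E" using h by (simp add: bij_betw_def)
    have fin: "finite {e\<in>E. h e = j}" using finite_E[OF assms] by simp
    show "card {e\<in>E. h e = j} \<le> 1"
      unfolding One_nat_def card_le_Suc0_iff_eq[OF fin] using inj by (auto simp: inj_on_def)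
  qed
  ultimately have *: "(\<forall>e\<in>E. h e < card E) \<and> (\<forall>j<card E. is_forest {e\<in>E. h e = j})" by blast
  show ?thesis by (rule exI[where x="card E"], rule exI[where x=h], rule *)
qed

lemma arb_prop:
  assumes "simple_graph V E"
  shows "\<exists>f. (\<forall>e\<in>E. f e < arboricity E) \<and> (\<forall>j<arboricity E. is_forest {e\<in>E. f e = j})"
  using LeastI_ex[OF arb_exists[OF assms]] unfolding arboricity_def .

lemma arb0:
  assumes "simple_graph V E" "arboricity E = 0"
  shows "E = {}"
  using arb_prop[OF assms(1)] assms(2) by auto

lemma edges_bound:
  assumes "simple_graph V E" "finite R"
  shows "card {e\<in>E. e \<subseteq> R} \<le> arboricity E * card R"
proof -
  obtain f where f: "\<forall>e\<in>E. f e < arboricity E" "\<forall>j<arboricity E. is_forest {e\<in>E. f e = j}"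
    using arb_prop[OF assms(1)] by blast
  have eq: "{e\<in>E. e \<subseteq> R} = (\<Union>j<arboricity E. {e\<in>E. e \<subseteq> R \<and> f e = j})"
    using f(1) by auto
  have "card {e\<in>E. e \<subseteq> R} \<le> (\<Sum>j<arboricity E. card {e\<in>E. e \<subseteq> R \<and> f e = j})"
    unfolding eq by (rule card_UN_le) simp
  also have "\<dots> \<le> (\<Sum>j<arboricity E. card R)"
  proof (rule sum_mono)
    fix j assume j: "j \<in> {..<arboricity E}"
    show "card {e\<in>E. e \<subseteq> R \<and> f e = j} \<le> card R"
    proof (rule forest_card[OF assms(2)])
      show "\<forall>e\<in>{e\<in>E. e \<subseteq> R \<and> f e = j}. e \<subseteq> R \<and> card e = 2"
        using assms(1) unfolding simple_graph_def by auto
      show "is_forest {e\<in>E. e \<subseteq> R \<and> f e = j}"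
        by (rule forest_mono[OF f(2)[rule_format, of j]]) (use j in auto)
    qed
  qed
  finally show ?thesis by simp
qed

lemma nbr_bij:
  assumes "simple_graph V E" "v \<in> R"
  shows "card {u\<in>R. {u, v} \<in> E} = card {e\<in>E. e \<subseteq> R \<and> v \<in> e}"
proof (rule bij_betw_same_card[of "\<lambda>u. {u, v}"])
  have nv: "{v} \<notin> E" using assms(1) unfolding simple_graph_def by fastforce
  show "bij_betw (\<lambda>u. {u, v}) {u\<in>R. {u, v} \<in> E} {e\<in>E. e \<subseteq> R \<and> v \<in> e}"
    unfolding bij_betw_def
  proof
    show "inj_on (\<lambda>u. {u, v}) {u\<in>R. {u, v} \<in> E}"
      unfolding inj_on_def using nv by (auto simp: doubleton_eq_iff)
    show "(\<lambda>u. {u, v}) ` {u\<in>R. {u, v} \<in> E} = {e\<in>E. e \<subseteq> R \<and> v \<in> e}"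
    proof
      show "(\<lambda>u. {u, v}) ` {u\<in>R. {u, v} \<in> E} \<subseteq> {e\<in>E. e \<subseteq> R \<and> v \<in> e}"
        using assms(2) by auto
      show "{e\<in>E. e \<subseteq> R \<and> v \<in> e} \<subseteq> (\<lambda>u. {u, v}) ` {u\<in>R. {u, v} \<in> E}"
      proof
        fix e assume e: "e \<in> {e\<in>E. e \<subseteq> R \<and> v \<in> e}"
        have "e \<in> E" using e by simp
        then have "card e = 2" using assms(1) unfolding simple_graph_def by blast
        then obtain x y where xy: "e = {x, y}" "x \<noteq> y" by (auto simp: card_2_iff)
        show "e \<in> (\<lambda>u. {u, v}) ` {u\<in>R. {u, v} \<in> E}"
        proof (cases "x = v")
          case True
          then have "e = {y, v}" using xy by auto
          then show ?thesis using e by auto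
        next
          case False
          then have "y = v" using xy e by auto
          then show ?thesis using e xy by auto
        qed
      qed
    qed
  qed
qed

lemma handshake:
  assumes "simple_graph V E" "finite R"
  shows "(\<Sum>v\<in>R. card {u\<in>R. {u, v} \<in> E}) = 2 * card {e\<in>E. e \<subseteq> R}"
proof -
  define A where "A = {e\<in>E. e \<subseteq> R}"
  have fA: "finite A" using finite_E[OF assms(1)] unfolding A_def by simp
  have "(\<Sum>v\<in>R. card {u\<in>R. {u, v} \<in> E}) = (\<Sum>v\<in>R. card {e\<in>A. v \<in> e})"
    using nbr_bij[OF assms(1)] unfolding A_def by (intro sum.cong) auto
  also have "\<dots> = (\<Sum>v\<in>R. \<Sum>e\<in>A. if v \<in> e then 1 else 0)"
    using fA by (intro sum.cong) (simp_all add: sum.inter_filter[symmetric])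
  also have "\<dots> = (\<Sum>e\<in>A. \<Sum>v\<in>R. if v \<in> e then 1 else 0)"
    by (rule sum.swap)
  also have "\<dots> = (\<Sum>e\<in>A. 2)"
  proof (rule sum.cong)
    fix e assume e: "e \<in> A"
    have "(\<Sum>v\<in>R. if v \<in> e then 1 else 0) = card {v\<in>R. v \<in> e}"
      using assms(2) by (simp add: sum.inter_filter[symmetric])
    also have "{v\<in>R. v \<in> e} = e" using e unfolding A_def by auto
    also have "card e = 2" using e assms(1) unfolding A_def simple_graph_def by auto
    finally show "(\<Sum>v\<in>R. if v \<in> e then 1 else 0) = (2::nat)" .
  qed simp
  finally show ?thesis unfolding A_def by simp
qed

lemma step_bound:
  assumes "simple_graph V E" "finite R" "d \<ge> 0"
  shows "d * real (card (peel_step E d R)) \<le> 2 * real (arboricity E) * real (card R)"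
proof -
  define S where "S = peel_step E d R"
  define deg where "deg v = real (card {u\<in>R. {u, v} \<in> E})" for v
  have S: "S = {v\<in>R. deg v > d}" unfolding S_def peel_step_def peel_layer_def deg_def by auto
  have fS: "finite S" using assms(2) S by simp
  have "d * real (card S) = (\<Sum>v\<in>S. d)" by simp
  also have "\<dots> \<le> (\<Sum>v\<in>S. deg v)" using S by (intro sum_mono) auto
  also have "\<dots> \<le> (\<Sum>v\<in>R. deg v)"
    using S assms(2) by (intro sum_mono2) (auto simp: deg_def)
  also have "\<dots> = real (\<Sum>v\<in>R. card {u\<in>R. {u, v} \<in> E})" unfolding deg_def by simp
  also have "\<dots> = 2 * real (card {e\<in>E. e \<subseteq> R})" using handshake[OF assms(1,2)] by simp
  also have "\<dots> \<le> 2 * real (arboricity E * card R)"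
  proof -
    have "real (card {e\<in>E. e \<subseteq> R}) \<le> real (arboricity E * card R)"
      using edges_bound[OF assms(1,2)] by (simp only: of_nat_le_iff)
    then show ?thesis by linarith
  qed
  finally show ?thesis unfolding S_def by simp
qed

lemma peel_sub: "peel_step E d R \<subseteq> R"
  unfolding peel_step_def by blast

lemma rl_sub: "remove_layers E d k R \<subseteq> R"
  unfolding remove_layers_def
proof (induction k)
  case (Suc k)
  then show ?case using peel_sub[of E d "(peel_step E d ^^ k) R"] by simp
qed simp

lemma pg_sub: "phase_graph E d W i \<subseteq> W"
proof (induction E d W i rule: phase_graph.induct)
  case (2 E d W)
  then show ?case using rl_sub by simp
next
  case (3 E d W i)
  have "phase_graph E d W (Suc (Suc i)) \<subseteq> phase_graph E d W (Suc i)" using rl_sub by simp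
  then show ?case using 3 by (rule subset_trans)
qed simp

lemma rl_empty:
  assumes "\<And>R. peel_step E d R = {}" "k > 0"
  shows "remove_layers E d k R = {}"
proof -
  obtain j where "k = Suc j" using assms(2) gr0_implies_Suc by blast
  then show ?thesis unfolding remove_layers_def using assms(1) by simp
qed

theorem lemma5:
  fixes V :: "'a set" and E :: "'a set set" and W :: "'a set" and i :: nat
  assumes "simple_graph V E"
    and "real (max_degree V E) \<ge> (2 * real (arboricity E)) ^ 20"
    and "W \<subseteq> V"
    and "i \<ge> 1"
  shows "real (card (phase_graph E (real (max_degree V E) powr (1/10)) W i))
           \<le> (real (card V) / real (max_degree V E)) / real (max_degree V E) ^ (2 ^ i)"
proof -
  define D where "D = real (max_degree V E)"
  define d where "d = D powr (1/10)"
  define n where "n = real (card V)"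
  have finV: "finite V" using assms(1) unfolding simple_graph_def by blast
  have D0: "D \<ge> 0" unfolding D_def by simp
  have d0: "d \<ge> 0" unfolding d_def by simp
  obtain m where im: "i = Suc m" using assms(4) by (metis Suc_pred' less_eq_Suc_le One_nat_def)
  have rhs0: "0 \<le> n / D / D ^ (2 ^ i)" unfolding n_def using D0 by simp
  show ?thesis
  proof (cases "arboricity E = 0")
    case True
    then have E0: "E = {}" using arb0[OF assms(1)] by blast
    have ps: "peel_step E d R = {}" for R
      unfolding peel_step_def peel_layer_def E0 using d0 by auto
    have "phase_graph E d W i = {}"
    proof (cases m)
      case 0 then show ?thesis using im rl_empty[OF ps] by simp
    next
      case (Suc j) then show ?thesis using im rl_empty[OF ps] by simp
    qed
    then show ?thesis using rhs0 unfolding d_def D_def n_def by simp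
  next
    case False
    define lam where "lam = real (arboricity E)"
    have lam1: "lam \<ge> 1" using False unfolding lam_def by simp
    have "(2 * lam) ^ 20 \<le> D" using assms(2) unfolding lam_def D_def by simp
    moreover have "(1::real) \<le> (2 * lam) ^ 20" by (rule one_le_power) (use lam1 in linarith)
    ultimately have Dpos: "D > 0" by simp
    define a where "a = D powr (1/20)"
    have apos: "a > 0" unfolding a_def using Dpos by simp
    have a20: "a ^ 20 = D" unfolding a_def using pw1 Dpos by simp
    have da: "d = a ^ 2"
    proof -
      have "a ^ 2 = a powr (real 2)" using apos by (subst powr_realpow) auto
      also have "\<dots> = D powr (1/20 * 2)" unfolding a_def by (simp add: powr_powr)
      finally show ?thesis unfolding d_def by simp
    qed
    have la: "2 * lam \<le> a"
    proof -
      have "2 * lam = ((2 * lam) ^ 20) powr (1/20)" using pw2[of "2 * lam"] lam1 by simp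
      also have "\<dots> \<le> a" unfolding a_def
        using powr_mono2[of "1/20" "(2 * lam) ^ 20" D] \<open>(2 * lam) ^ 20 \<le> D\<close> lam1 by simp
      finally show ?thesis .
    qed
    have step: "real (card (peel_step E d R)) \<le> real (card R) / a" if "R \<subseteq> V" for R
    proof -
      have fR: "finite R" using that finV finite_subset by blast
      have "a * (a * real (card (peel_step E d R))) = d * real (card (peel_step E d R))"
        unfolding da by (simp add: power2_eq_square)
      also have "\<dots> \<le> 2 * lam * real (card R)" using step_bound[OF assms(1) fR d0] unfolding lam_def .
      also have "\<dots> \<le> a * real (card R)" using la by (simp add: mult_right_mono)
      finally have "a * real (card (peel_step E d R)) \<le> real (card R)"
        using apos by simp
      then show ?thesis using apos by (simp add: field_simps)
    qed
    have iter: "real (card (remove_layers E d k R)) \<le> real (card R) / a ^ k" if "R \<subseteq> V" for k R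
    proof (induction k)
      case 0 then show ?case by (simp add: remove_layers_def)
    next
      case (Suc k)
      have sub: "remove_layers E d k R \<subseteq> V" using rl_sub[of E d k R] that by (rule subset_trans)
      have "real (card (remove_layers E d (Suc k) R)) = real (card (peel_step E d (remove_layers E d k R)))"
        unfolding remove_layers_def by simp
      also have "\<dots> \<le> real (card (remove_layers E d k R)) / a" using step[OF sub] .
      also have "\<dots> \<le> (real (card R) / a ^ k) / a" by (rule divide_right_mono[OF Suc]) (use apos in simp)
      also have "\<dots> = real (card R) / a ^ Suc k" by (simp add: field_simps)
      finally show ?case .
    qed
    have cW: "real (card W) \<le> n" unfolding n_def using card_mono[OF finV assms(3)] by simp
    have main: "real (card (phase_graph E d W (Suc j))) \<le> n / D / D ^ (2 ^ Suc j)" for j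
    proof (induction j)
      case 0
      have "real (card (phase_graph E d W (Suc 0))) \<le> real (card W) / a ^ 60"
        using iter[OF assms(3)] by simp
      also have "\<dots> \<le> n / a ^ 60" using cW apos by (simp add: divide_right_mono)
      also have "a ^ 60 = D ^ 3"
      proof -
        have e: "a ^ 60 = (a ^ 20) ^ 3" by (simp only: power_mult[symmetric]) simp
        show ?thesis using e a20 by (simp only:)
      qed
      also have "n / D ^ 3 = n / D / D ^ (2 ^ Suc 0)" by (simp add: field_simps power_numeral_reduce)
      finally show ?case .
    next
      case (Suc j)
      have sub: "phase_graph E d W (Suc j) \<subseteq> V" using pg_sub[of E d W "Suc j"] assms(3) by (rule subset_trans)
      have pa: "a ^ (20 * 2 ^ Suc j) = D ^ (2 ^ Suc j)"
        using power_mult[of a 20 "2 ^ Suc j"] a20 by (simp only:)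
      have "real (card (phase_graph E d W (Suc (Suc j))))
          \<le> real (card (phase_graph E d W (Suc j))) / a ^ (20 * 2 ^ Suc j)"
        using iter[OF sub] by simp
      also have "\<dots> \<le> (n / D / D ^ (2 ^ Suc j)) / D ^ (2 ^ Suc j)"
        unfolding pa by (rule divide_right_mono[OF Suc]) (use Dpos in simp)
      also have "\<dots> = n / D / D ^ (2 ^ Suc (Suc j))"
      proof -
        have "D ^ (2 ^ Suc (Suc j)) = D ^ (2 ^ Suc j) * D ^ (2 ^ Suc j)"
          by (simp add: power_add[symmetric] mult_2)
        then show ?thesis by simp
      qed
      finally show ?case .
    qed
    show ?thesis using main[of m] unfolding im d_def D_def n_def .
  qed
qed

end
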